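(* For any graph $G$ with no isolated vertex, order $n$ and maximum degree $\Delta$, $$\left\lceil\frac{2n+\gamma_t(G)}{\Delta+1}\right\rceil\le\gamma_{(2,2,1)}(G)\le\min\{3\gamma(G),2\gamma_t(G)\}.$$ Furthermore, if $G$ has minimum degree $\delta\ge2$, then $\gamma_{(2,2,1)}(G)\le\gamma_{\times2,t}(G)$.
   Context: All graphs are finite and simple; $N(v)$ is the open neighbourhood. $\gamma_{(2,2,1)}(G)$ is the minimum of $\sum_v f(v)$ over functions $f:V(G)\to\{0,1,2\}$ such that $\sum_{u\in N(v)}f(u)\ge 2$ whenever $f(v)\in\{0,1\}$ and $\sum_{u\in N(v)}f(u)\ge1$ whenever $f(v)=2$. $\gamma(G)$ is the domination number, $\gamma_t(G)$ the total domination number (minimum size of $S$ such that every vertex has a neighbour in $S$), and $\gamma_{\times2,t}(G)$ the minimum size of $S\subseteq V(G)$ such that every vertex has at least two neighbours in $S$. *)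

theory Defs
  imports Complex_Main
begin

definition simple_graph :: "'a set \<Rightarrow> ('a \<Rightarrow> 'a \<Rightarrow> bool) \<Rightarrow> bool" where
  "simple_graph V E \<longleftrightarrow> finite V \<and> V \<noteq> {} \<and>
     (\<forall>u v. E u v \<longrightarrow> u \<in> V \<and> v \<in> V) \<and>
     (\<forall>u v. E u v \<longrightarrow> E v u) \<and> (\<forall>v. \<not> E v v)"

definition nbhd :: "'a set \<Rightarrow> ('a \<Rightarrow> 'a \<Rightarrow> bool) \<Rightarrow> 'a \<Rightarrow> 'a set" where
  "nbhd V E v = {u \<in> V. E v u}"

definition degree :: "'a set \<Rightarrow> ('a \<Rightarrow> 'a \<Rightarrow> bool) \<Rightarrow> 'a \<Rightarrow> nat" where
  "degree V E v = card (nbhd V E v)"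

definition max_degree :: "'a set \<Rightarrow> ('a \<Rightarrow> 'a \<Rightarrow> bool) \<Rightarrow> nat" where
  "max_degree V E = Max (degree V E ` V)"

definition min_degree :: "'a set \<Rightarrow> ('a \<Rightarrow> 'a \<Rightarrow> bool) \<Rightarrow> nat" where
  "min_degree V E = Min (degree V E ` V)"

definition no_isolated :: "'a set \<Rightarrow> ('a \<Rightarrow> 'a \<Rightarrow> bool) \<Rightarrow> bool" where
  "no_isolated V E \<longleftrightarrow> (\<forall>v\<in>V. nbhd V E v \<noteq> {})"

definition dominating :: "'a set \<Rightarrow> ('a \<Rightarrow> 'a \<Rightarrow> bool) \<Rightarrow> 'a set \<Rightarrow> bool" where
  "dominating V E S \<longleftrightarrow> S \<subseteq> V \<and> (\<forall>v\<in>V. v \<in> S \<or> nbhd V E v \<inter> S \<noteq> {})"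

definition domination_number :: "'a set \<Rightarrow> ('a \<Rightarrow> 'a \<Rightarrow> bool) \<Rightarrow> nat" where
  "domination_number V E = (LEAST k. \<exists>S. dominating V E S \<and> card S = k)"

definition total_dominating :: "'a set \<Rightarrow> ('a \<Rightarrow> 'a \<Rightarrow> bool) \<Rightarrow> 'a set \<Rightarrow> bool" where
  "total_dominating V E S \<longleftrightarrow> S \<subseteq> V \<and> (\<forall>v\<in>V. nbhd V E v \<inter> S \<noteq> {})"

definition total_domination_number :: "'a set \<Rightarrow> ('a \<Rightarrow> 'a \<Rightarrow> bool) \<Rightarrow> nat" where
  "total_domination_number V E = (LEAST k. \<exists>S. total_dominating V E S \<and> card S = k)"

definition double_total_dominating :: "'a set \<Rightarrow> ('a \<Rightarrow> 'a \<Rightarrow> bool) \<Rightarrow> 'a set \<Rightarrow> bool" where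
  "double_total_dominating V E S \<longleftrightarrow> S \<subseteq> V \<and> (\<forall>v\<in>V. card (nbhd V E v \<inter> S) \<ge> 2)"

definition double_total_domination_number :: "'a set \<Rightarrow> ('a \<Rightarrow> 'a \<Rightarrow> bool) \<Rightarrow> nat" where
  "double_total_domination_number V E =
     (LEAST k. \<exists>S. double_total_dominating V E S \<and> card S = k)"

definition dom221_function :: "'a set \<Rightarrow> ('a \<Rightarrow> 'a \<Rightarrow> bool) \<Rightarrow> ('a \<Rightarrow> nat) \<Rightarrow> bool" where
  "dom221_function V E f \<longleftrightarrow> (\<forall>v. v \<notin> V \<longrightarrow> f v = 0) \<and> (\<forall>v\<in>V. f v \<le> 2) \<and>
     (\<forall>v\<in>V. f v \<le> 1 \<longrightarrow> (\<Sum>u\<in>nbhd V E v. f u) \<ge> 2) \<and>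
     (\<forall>v\<in>V. f v = 2 \<longrightarrow> (\<Sum>u\<in>nbhd V E v. f u) \<ge> 1)"

definition gamma221 :: "'a set \<Rightarrow> ('a \<Rightarrow> 'a \<Rightarrow> bool) \<Rightarrow> nat" where
  "gamma221 V E = (LEAST k. \<exists>f. dom221_function V E f \<and> (\<Sum>v\<in>V. f v) = k)"

end

theory Submission
  imports Defs
begin

lemma nb_fin: "simple_graph V E \<Longrightarrow> finite (nbhd V E v)"
  unfolding simple_graph_def nbhd_def by auto

lemma supp_td:
  assumes "simple_graph V E" "dom221_function V E f"
  shows "total_dominating V E {v\<in>V. f v > 0}"
  unfolding total_dominating_def
proof (intro conjI ballI)
  fix v assume v: "v \<in> V"
  have "(\<Sum>u\<in>nbhd V E v. f u) \<ge> 1"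
  proof (cases "f v \<le> 1")
    case True then show ?thesis using assms(2) v unfolding dom221_function_def by fastforce
  next
    case False then have "f v = 2" using assms(2) v unfolding dom221_function_def by force
    then show ?thesis using assms(2) v unfolding dom221_function_def by blast
  qed
  then have "(\<Sum>u\<in>nbhd V E v. f u) \<noteq> 0" by simp
  then obtain u where "u \<in> nbhd V E v" "f u \<noteq> 0" by (metis (mono_tags, lifting) sum.neutral)
  then show "nbhd V E v \<inter> {v \<in> V. 0 < f v} \<noteq> {}" unfolding nbhd_def by auto
qed auto

lemma double_count:
  assumes "simple_graph V E"
  shows "(\<Sum>v\<in>V. \<Sum>u\<in>nbhd V E v. f u) = (\<Sum>u\<in>V. f u * degree V E u)"
proof -
  have fin: "finite V" using assms unfolding simple_graph_def by auto
  have sym: "\<And>u v. E u v = E v u" using assms unfolding simple_graph_def by blast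
  have "(\<Sum>v\<in>V. \<Sum>u\<in>nbhd V E v. f u) = (\<Sum>v\<in>V. \<Sum>u\<in>V. if E v u then f u else 0)"
    unfolding nbhd_def by (simp add: sum.inter_filter[OF fin])
  also have "\<dots> = (\<Sum>u\<in>V. \<Sum>v\<in>V. if E v u then f u else 0)" by (rule sum.swap)
  also have "\<dots> = (\<Sum>u\<in>V. f u * degree V E u)"
  proof (rule sum.cong[OF refl])
    fix u assume "u \<in> V"
    have "(\<Sum>v\<in>V. if E v u then f u else 0) = (\<Sum>v\<in>{v\<in>V. E v u}. f u)"
      by (rule sum.inter_filter[OF fin, symmetric])
    also have "{v\<in>V. E v u} = nbhd V E u" using sym unfolding nbhd_def by auto
    also have "(\<Sum>v\<in>nbhd V E u. f u) = f u * degree V E u" unfolding degree_def by simp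
    finally show "(\<Sum>v\<in>V. if E v u then f u else 0) = f u * degree V E u" .
  qed
  finally show ?thesis .
qed

lemma exists221:
  assumes "simple_graph V E" "no_isolated V E"
  shows "\<exists>k f. dom221_function V E f \<and> (\<Sum>v\<in>V. f v) = k"
proof -
  define f where "f v = (if v \<in> V then 2 else 0::nat)" for v
  have "dom221_function V E f"
    unfolding dom221_function_def
  proof (intro conjI allI ballI impI)
    fix v assume v: "v \<in> V"
    then obtain u where u: "u \<in> nbhd V E v" using assms(2) unfolding no_isolated_def by blast
    have "f u \<le> (\<Sum>u\<in>nbhd V E v. f u)"
      using u nb_fin[OF assms(1)] by (intro member_le_sum) auto
    moreover have "f u = 2" using u unfolding f_def nbhd_def by auto
    ultimately show "2 \<le> (\<Sum>u\<in>nbhd V E v. f u)" "1 \<le> (\<Sum>u\<in>nbhd V E v. f u)" by auto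
  qed (auto simp: f_def)
  then show ?thesis by blast
qed

lemma sum_ind: "finite A \<Longrightarrow> (\<Sum>u\<in>A. if u \<in> S then c else (0::nat)) = c * card (A \<inter> S)"
  by (simp add: sum.inter_restrict[symmetric])

lemma nb_le: "simple_graph V E \<Longrightarrow> u \<in> nbhd V E v \<Longrightarrow> (f u::nat) \<le> (\<Sum>u\<in>nbhd V E v. f u)"
  using nb_fin by (intro member_le_sum) auto

theorem theorem23:
  fixes V :: "'a set" and E :: "'a \<Rightarrow> 'a \<Rightarrow> bool"
  assumes "simple_graph V E" and "no_isolated V E"
  shows "(\<lceil>(2 * real (card V) + real (total_domination_number V E)) / (real (max_degree V E) + 1)\<rceil>
           \<le> int (gamma221 V E)) \<and>
         gamma221 V E \<le> min (3 * domination_number V E) (2 * total_domination_number V E) \<and>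
         (min_degree V E \<ge> 2 \<longrightarrow> gamma221 V E \<le> double_total_domination_number V E)"
proof -
  have fin: "finite V" and Vne: "V \<noteq> {}" and inV: "\<And>u v. E u v \<Longrightarrow> u \<in> V \<and> v \<in> V"
    and sym: "\<And>u v. E u v \<Longrightarrow> E v u"
    using assms(1) unfolding simple_graph_def by auto
  have nbV: "nbhd V E v \<subseteq> V" for v unfolding nbhd_def by auto
  have td_ex: "total_dominating V E V" using assms(2) unfolding total_dominating_def no_isolated_def
    using nbV by (metis inf.orderE order_refl)
  have ex221: "\<exists>f. dom221_function V E f \<and> (\<Sum>v\<in>V. f v) = k" if "dom221_function V E f" "(\<Sum>v\<in>V. f v) = k" for f k
    using that by blast
  have g_le: "gamma221 V E \<le> (\<Sum>v\<in>V. f v)" if "dom221_function V E f" for f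
    unfolding gamma221_def using that by (intro Least_le) blast
  obtain f where f: "dom221_function V E f" "(\<Sum>v\<in>V. f v) = gamma221 V E"
    using LeastI_ex[OF exists221[OF assms]] unfolding gamma221_def by blast
  define w where "w = gamma221 V E"
  define D where "D = max_degree V E"
  define ns where "ns v = (\<Sum>u\<in>nbhd V E v. f u)" for v
  define g where "g v = (if f v = 2 then 1 else 0::nat)" for v
  define h where "h v = (if f v > 0 then 1 else 0::nat)" for v
  have deg_le: "degree V E u \<le> D" if "u \<in> V" for u
    unfolding D_def max_degree_def using fin that by (intro Max_ge) auto
  have d: "(\<Sum>v\<in>V. ns v) \<le> D * w"
  proof -
    have "(\<Sum>v\<in>V. ns v) = (\<Sum>u\<in>V. f u * degree V E u)"
      unfolding ns_def by (rule double_count[OF assms(1)])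
    also have "\<dots> \<le> (\<Sum>u\<in>V. f u * D)" by (intro sum_mono mult_le_mono2 deg_le)
    also have "\<dots> = D * w" unfolding w_def f(2)[symmetric] by (metis sum_distrib_right mult.commute)
    finally show ?thesis .
  qed
  have a: "2 * card V \<le> (\<Sum>v\<in>V. ns v) + (\<Sum>v\<in>V. g v)"
  proof -
    have "(\<Sum>v\<in>V. 2::nat) \<le> (\<Sum>v\<in>V. ns v + g v)"
    proof (rule sum_mono)
      fix v assume v: "v \<in> V"
      show "2 \<le> ns v + g v"
      proof (cases "f v \<le> 1")
        case True then show ?thesis using f(1) v unfolding dom221_function_def ns_def by auto
      next
        case False then have "f v = 2" using f(1) v unfolding dom221_function_def by force
        then show ?thesis using f(1) v unfolding dom221_function_def ns_def g_def by auto
      qed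
    qed
    then show ?thesis by (simp add: sum.distrib)
  qed
  have b: "(\<Sum>v\<in>V. h v) + (\<Sum>v\<in>V. g v) \<le> w"
  proof -
    have "(\<Sum>v\<in>V. h v + g v) \<le> (\<Sum>v\<in>V. f v)"
    proof (rule sum_mono)
      fix v assume v: "v \<in> V"
      then have "f v \<le> 2" using f(1) unfolding dom221_function_def by auto
      then show "h v + g v \<le> f v" unfolding h_def g_def by auto
    qed
    then show ?thesis unfolding w_def f(2) by (simp add: sum.distrib)
  qed
  have c: "total_domination_number V E \<le> (\<Sum>v\<in>V. h v)"
  proof -
    have "(\<Sum>v\<in>V. h v) = card (V \<inter> {v. f v > 0})" unfolding h_def
      using sum_ind[OF fin, of "{v. f v > 0}" 1] by (simp add: if_distrib)
    also have "\<dots> = card {v\<in>V. f v > 0}" by (simp add: Collect_conj_eq Int_commute)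
    finally have eq: "(\<Sum>v\<in>V. h v) = card {v\<in>V. f v > 0}" .
    show ?thesis unfolding total_domination_number_def eq
      using supp_td[OF assms(1) f(1)] by (intro Least_le) blast
  qed
  have main: "2 * card V + total_domination_number V E \<le> (D + 1) * w"
    using a b c d by (simp add: algebra_simps)
  have P1: "\<lceil>(2 * real (card V) + real (total_domination_number V E)) / (real (max_degree V E) + 1)\<rceil>
           \<le> int (gamma221 V E)"
  proof -
    have "2 * real (card V) + real (total_domination_number V E) \<le> (real D + 1) * real w"
      using main by (metis (mono_tags, lifting) of_nat_1 of_nat_add of_nat_le_iff of_nat_mult of_nat_numeral)
    then have "(2 * real (card V) + real (total_domination_number V E)) / (real D + 1) \<le> real w"
      by (simp add: divide_le_eq mult.commute)
    then show ?thesis unfolding D_def w_def by (simp add: ceiling_le_iff)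
  qed
  have P2: "gamma221 V E \<le> 3 * domination_number V E"
  proof -
    have "dominating V E V" unfolding dominating_def by auto
    then obtain S where S: "dominating V E S" "card S = domination_number V E"
      using LeastI_ex[of "\<lambda>k. \<exists>S. dominating V E S \<and> card S = k"] unfolding domination_number_def by blast
    have SV: "S \<subseteq> V" using S(1) unfolding dominating_def by auto
    define nb where "nb s = (SOME u. u \<in> nbhd V E s)" for s
    have nb: "nb s \<in> nbhd V E s" if "s \<in> S" for s
      unfolding nb_def using assms(2) SV that unfolding no_isolated_def by (metis some_in_eq subsetD)
    define T where "T = nb ` S"
    have TV: "T \<subseteq> V" using nb nbV unfolding T_def by blast
    define F where "F v = (if v \<in> S then 2 else if v \<in> T then 1 else 0::nat)" for v
    have "dom221_function V E F" unfolding dom221_function_def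
    proof (intro conjI allI ballI impI)
      fix v assume v: "v \<in> V" "F v \<le> 1"
      then have "v \<notin> S" unfolding F_def by auto
      then obtain u where u: "u \<in> nbhd V E v" "u \<in> S" using S(1) v unfolding dominating_def by blast
      show "2 \<le> (\<Sum>u\<in>nbhd V E v. F u)" using nb_le[OF assms(1) u(1), of F] u(2) unfolding F_def by auto
    next
      fix v assume v: "v \<in> V" "F v = 2"
      then have "v \<in> S" unfolding F_def by (auto split: if_splits)
      then have "nb v \<in> nbhd V E v" "nb v \<in> T" using nb unfolding T_def by auto
      then show "1 \<le> (\<Sum>u\<in>nbhd V E v. F u)" using nb_le[OF assms(1) \<open>nb v \<in> nbhd V E v\<close>, of F]
        unfolding F_def by (auto split: if_splits)
    qed (use SV TV in \<open>auto simp: F_def\<close>)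
    then have "gamma221 V E \<le> (\<Sum>v\<in>V. F v)" by (rule g_le)
    also have "\<dots> \<le> (\<Sum>v\<in>V. (if v \<in> S then 2 else 0) + (if v \<in> T then 1 else 0))"
      unfolding F_def by (intro sum_mono) auto
    also have "\<dots> = 2 * card (V \<inter> S) + 1 * card (V \<inter> T)"
      by (simp only: sum.distrib sum_ind[OF fin])
    also have "\<dots> \<le> 2 * card S + card S"
    proof -
      have "card (V \<inter> S) = card S" using SV by (simp add: Int_absorb1)
      moreover have "card (V \<inter> T) \<le> card S" using TV card_image_le[of S nb] fin SV
        unfolding T_def by (simp add: Int_absorb1 finite_subset)
      ultimately show ?thesis by simp
    qed
    finally show ?thesis using S(2) by simp
  qed
  have P3: "gamma221 V E \<le> 2 * total_domination_number V E"
  proof -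
    obtain S where S: "total_dominating V E S" "card S = total_domination_number V E"
      using LeastI_ex[of "\<lambda>k. \<exists>S. total_dominating V E S \<and> card S = k"] td_ex
      unfolding total_domination_number_def by blast
    have SV: "S \<subseteq> V" using S(1) unfolding total_dominating_def by auto
    define F where "F v = (if v \<in> S then 2 else 0::nat)" for v
    have "dom221_function V E F" unfolding dom221_function_def
    proof (intro conjI allI ballI impI)
      fix v assume v: "v \<in> V"
      then obtain u where u: "u \<in> nbhd V E v" "u \<in> S" using S(1) unfolding total_dominating_def by blast
      show "2 \<le> (\<Sum>u\<in>nbhd V E v. F u)" "1 \<le> (\<Sum>u\<in>nbhd V E v. F u)"
        using nb_le[OF assms(1) u(1), of F] u(2) unfolding F_def by auto
    qed (use SV in \<open>auto simp: F_def\<close>)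
    then have "gamma221 V E \<le> (\<Sum>v\<in>V. F v)" by (rule g_le)
    also have "\<dots> = 2 * card (V \<inter> S)" unfolding F_def by (rule sum_ind[OF fin])
    also have "\<dots> = 2 * card S" using SV by (simp add: Int_absorb1)
    finally show ?thesis using S(2) by simp
  qed
  have P4: "gamma221 V E \<le> double_total_domination_number V E" if md: "min_degree V E \<ge> 2"
  proof -
    have "double_total_dominating V E V" unfolding double_total_dominating_def
    proof (intro conjI ballI)
      fix v assume v: "v \<in> V"
      have "min_degree V E \<le> degree V E v" unfolding min_degree_def using fin v by (intro Min_le) auto
      then show "2 \<le> card (nbhd V E v \<inter> V)" using md nbV[of v] unfolding degree_def
        by (simp add: Int_absorb2)
    qed auto
    then obtain S where S: "double_total_dominating V E S" "card S = double_total_domination_number V E"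
      using LeastI_ex[of "\<lambda>k. \<exists>S. double_total_dominating V E S \<and> card S = k"]
      unfolding double_total_domination_number_def by blast
    have SV: "S \<subseteq> V" using S(1) unfolding double_total_dominating_def by auto
    define F where "F v = (if v \<in> S then 1 else 0::nat)" for v
    have "dom221_function V E F" unfolding dom221_function_def
    proof (intro conjI allI ballI impI)
      fix v assume v: "v \<in> V"
      have "(\<Sum>u\<in>nbhd V E v. F u) = card (nbhd V E v \<inter> S)"
        unfolding F_def using sum_ind[OF nb_fin[OF assms(1)], where S=S and c=1] by simp
      moreover have "card (nbhd V E v \<inter> S) \<ge> 2" using S(1) v unfolding double_total_dominating_def by auto
      ultimately show "2 \<le> (\<Sum>u\<in>nbhd V E v. F u)" "1 \<le> (\<Sum>u\<in>nbhd V E v. F u)" by auto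
    qed (use SV in \<open>auto simp: F_def\<close>)
    then have "gamma221 V E \<le> (\<Sum>v\<in>V. F v)" by (rule g_le)
    also have "\<dots> = 1 * card (V \<inter> S)" unfolding F_def by (rule sum_ind[OF fin])
    also have "\<dots> = card S" using SV by (simp add: Int_absorb1)
    finally show ?thesis using S(2) by simp
  qed
  show ?thesis using P1 P2 P3 P4 by auto
qed

end
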